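(* Let $S$ be a scoring function, $k,n\in\mathbb{N}$, $m=kn$, and let $(\vec r,\vec s)\in\mathcal{P}_{m,n}$. Then $$\frac{E[L_m(S,\vec r,\vec s)]}{m}\le\lambda_n(S)+\frac{2\|S\|_\infty}{n}.$$
   Context: Let $\mathcal{A}$ be a finite alphabet and $\mathcal{A}^*=\mathcal{A}\cup\{G\}$, where $G$ is a gap symbol. A scoring function is a symmetric map $S:\mathcal{A}^*\times\mathcal{A}^*\to\mathbb{R}$; $\|S\|_\infty=\max_{c,d\in\mathcal{A}^*}|S(c,d)|$. For strings $x=x_1\dots x_p$, $y=y_1\dots y_{q}$ over $\mathcal{A}$ (possibly empty), an alignment $\pi$ is a sequence $((\mu_1,\nu_1),\dots,(\mu_j,\nu_j))$, $j\ge0$, with $1\le\mu_1<\dots<\mu_j\le p$ and $1\le\nu_1<\dots<\nu_j\le q$; its score is $S_\pi(x,y)=\sum_{i=1}^j S(x_{\mu_i},y_{\nu_i})+\sum_{l\notin\{\mu_i\}}S(x_l,G)+\sum_{l\notin\{\nu_i\}}S(G,y_l)$, and $L_S(x,y)=\max_\pi S_\pi(x,y)$. Let $X_1,X_2,\dots,Y_1,Y_2,\dots$ be i.i.d. letters in $\mathcal{A}$; $\lambda_n(S)=E[L_S(X_1\dots X_n,Y_1\dots Y_n)]/n$. $\mathcal{P}_{m,n}$ is the set of pairs of integer vectors $\vec r=(r_0,\dots,r_{2k})$, $\vec s=(s_0,\dots,s_{2k})$ with $0=r_0\le r_1\le\dots\le r_{2k}=m$, $0=s_0\le s_1\le\dots\le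 s_{2k}=m$ and $r_i-r_{i-1}+s_i-s_{i-1}\in\{n-1,n,n+1\}$ for $i=1,\dots,2k$. For such a pair, $L_m(S,\vec r,\vec s)=\sum_{i=1}^{2k}L_S(X_{r_{i-1}+1}\dots X_{r_i},\,Y_{s_{i-1}+1}\dots Y_{s_i})$. *)

theory Defs
  imports "HOL-Probability.Probability"
begin

text \<open>Letters of the alphabet are elements of a finite type 'a; the extended alphabet
  A* = A + {G} is 'a option, with None playing the role of the gap symbol G.
  Strings are lists, position l (1-based) of x is x ! (l - 1).\<close>

type_synonym 'a scoring = "'a option \<Rightarrow> 'a option \<Rightarrow> real"

definition scoring_function :: "'a scoring \<Rightarrow> bool" where
  "scoring_function S \<longleftrightarrow> (\<forall>c d. S c d = S d c)"

definition sup_norm :: "('a::finite) scoring \<Rightarrow> real" where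
  "sup_norm S = Max {\<bar>S c d\<bar> | c d. True}"

definition is_alignment :: "nat \<Rightarrow> nat \<Rightarrow> (nat \<times> nat) list \<Rightarrow> bool" where
  "is_alignment p q \<pi> \<longleftrightarrow>
     sorted_wrt (<) (map fst \<pi>) \<and> sorted_wrt (<) (map snd \<pi>) \<and>
     (\<forall>(\<mu>, \<nu>) \<in> set \<pi>. 1 \<le> \<mu> \<and> \<mu> \<le> p \<and> 1 \<le> \<nu> \<and> \<nu> \<le> q)"

definition align_score :: "'a scoring \<Rightarrow> 'a list \<Rightarrow> 'a list \<Rightarrow> (nat \<times> nat) list \<Rightarrow> real" where
  "align_score S x y \<pi> =
     (\<Sum>(\<mu>, \<nu>) \<leftarrow> \<pi>. S (Some (x ! (\<mu> - 1))) (Some (y ! (\<nu> - 1))))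
     + (\<Sum>l \<in> {1..length x} - fst ` set \<pi>. S (Some (x ! (l - 1))) None)
     + (\<Sum>l \<in> {1..length y} - snd ` set \<pi>. S None (Some (y ! (l - 1))))"

definition L_S :: "'a scoring \<Rightarrow> 'a list \<Rightarrow> 'a list \<Rightarrow> real" where
  "L_S S x y = Max (align_score S x y ` {\<pi>. is_alignment (length x) (length y) \<pi>})"

text \<open>The i.i.d. letters X_1, X_2, ... and Y_1, Y_2, ... with common law p: the first N
  of each are the pair of independent words drawn from replicate_pmf N p.\<close>
definition words_pmf :: "'a pmf \<Rightarrow> nat \<Rightarrow> ('a list \<times> 'a list) pmf" where
  "words_pmf p N = pair_pmf (replicate_pmf N p) (replicate_pmf N p)"

definition lambda_n :: "'a pmf \<Rightarrow> 'a scoring \<Rightarrow> nat \<Rightarrow> real" where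
  "lambda_n p S n = measure_pmf.expectation (words_pmf p n) (\<lambda>(xs, ys). L_S S xs ys) / real n"

text \<open>Substring w_{a+1} ... w_b of w (1-based).\<close>
definition seg :: "'a list \<Rightarrow> nat \<Rightarrow> nat \<Rightarrow> 'a list" where
  "seg w a b = take (b - a) (drop a w)"

text \<open>P_{m,n} with k = m div n (in the theorem m = k n): vectors r_0..r_{2k}, s_0..s_{2k}.\<close>
definition P_mn :: "nat \<Rightarrow> nat \<Rightarrow> (nat list \<times> nat list) set" where
  "P_mn m n = {(r, s). let k = m div n in
      length r = 2 * k + 1 \<and> length s = 2 * k + 1 \<and>
      r ! 0 = 0 \<and> s ! 0 = 0 \<and> r ! (2 * k) = m \<and> s ! (2 * k) = m \<and>
      (\<forall>i \<in> {1..2 * k}. r ! (i - 1) \<le> r ! i \<and> s ! (i - 1) \<le> s ! i \<and>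
         (r ! i - r ! (i - 1)) + (s ! i - s ! (i - 1)) \<in> {n - 1, n, n + 1})}"

definition L_m :: "'a scoring \<Rightarrow> nat list \<Rightarrow> nat list \<Rightarrow> 'a list \<Rightarrow> 'a list \<Rightarrow> real" where
  "L_m S r s xs ys = (\<Sum>i = 1..length r - 1.
      L_S S (seg xs (r ! (i - 1)) (r ! i)) (seg ys (s ! (i - 1)) (s ! i)))"

end

theory Submission
  imports Defs
begin


definition mono_set :: "(nat \<times> nat) set \<Rightarrow> bool" where
  "mono_set T \<longleftrightarrow> (\<forall>t1\<in>T. \<forall>t2\<in>T. (fst t1 < fst t2 \<longleftrightarrow> snd t1 < snd t2) \<and> (fst t1 = fst t2 \<longrightarrow> t1 = t2)
      \<and> (snd t1 = snd t2 \<longrightarrow> t1 = t2))"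

lemma alignment_distinct:
  assumes "is_alignment P Q \<pi>" shows "distinct \<pi>"
proof -
  have "distinct (map fst \<pi>)" using assms unfolding is_alignment_def
    by (simp add: strict_sorted_iff)
  thus ?thesis by (simp add: distinct_map)
qed

lemma alignment_mono_set:
  assumes "is_alignment P Q \<pi>" shows "mono_set (set \<pi>)"
proof -
  have s1: "sorted_wrt (<) (map fst \<pi>)" and s2: "sorted_wrt (<) (map snd \<pi>)"
    using assms unfolding is_alignment_def by auto
  have key: "fst (\<pi>!i) < fst (\<pi>!j) \<and> snd (\<pi>!i) < snd (\<pi>!j)" if "i < j" "j < length \<pi>" for i j
    using s1 s2 that by (auto simp: sorted_wrt_iff_nth_less)
  show ?thesis unfolding mono_set_def
  proof (intro ballI)
    fix t1 t2 assume "t1 \<in> set \<pi>" "t2 \<in> set \<pi>"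
    then obtain i j where ij: "i < length \<pi>" "j < length \<pi>" "t1 = \<pi>!i" "t2 = \<pi>!j"
      by (auto simp: in_set_conv_nth)
    consider "i < j" | "i = j" | "j < i" by linarith
    then show "(fst t1 < fst t2 \<longleftrightarrow> snd t1 < snd t2) \<and> (fst t1 = fst t2 \<longrightarrow> t1 = t2)
      \<and> (snd t1 = snd t2 \<longrightarrow> t1 = t2)"
    proof cases
      case 1 then show ?thesis using key[of i j] ij by auto
    next
      case 2 then show ?thesis using ij by auto
    next
      case 3 then show ?thesis using key[of j i] ij by auto
    qed
  qed
qed

lemma alignment_range:
  assumes "is_alignment P Q \<pi>" "t \<in> set \<pi>"
  shows "1 \<le> fst t \<and> fst t \<le> P \<and> 1 \<le> snd t \<and> snd t \<le> Q"
  using assms unfolding is_alignment_def by auto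

lemma alignment_length:
  assumes "is_alignment P Q \<pi>" shows "length \<pi> \<le> P"
proof -
  have d: "distinct (map fst \<pi>)" using assms unfolding is_alignment_def
    by (simp add: strict_sorted_iff)
  have "set (map fst \<pi>) \<subseteq> {1..P}" using alignment_range[OF assms] by auto
  hence "card (set (map fst \<pi>)) \<le> P" using card_mono[of "{1..P}"] by fastforce
  thus ?thesis using distinct_card[OF d] by simp
qed

lemma alignments_finite: "finite {\<pi>. is_alignment P Q \<pi>}"
proof -
  have "{\<pi>. is_alignment P Q \<pi>} \<subseteq> {\<pi>. set \<pi> \<subseteq> {1..P} \<times> {1..Q} \<and> length \<pi> \<le> P}"
    using alignment_range alignment_length by fastforce
  moreover have "finite {\<pi>. set \<pi> \<subseteq> {1..P} \<times> {1..Q} \<and> length \<pi> \<le> P}"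
    by (rule finite_lists_length_le) auto
  ultimately show ?thesis by (rule finite_subset)
qed

lemma alignment_Nil: "is_alignment P Q []"
  by (simp add: is_alignment_def)

lemma L_S_ge:
  assumes "is_alignment (length x) (length y) \<pi>"
  shows "align_score S x y \<pi> \<le> L_S S x y"
  unfolding L_S_def using assms alignments_finite by (intro Max_ge) auto

lemma L_S_obtain:
  obtains \<pi> where "is_alignment (length x) (length y) \<pi>" "L_S S x y = align_score S x y \<pi>"
proof -
  have "L_S S x y \<in> align_score S x y ` {\<pi>. is_alignment (length x) (length y) \<pi>}"
    unfolding L_S_def using alignments_finite alignment_Nil by (intro Max_in) blast+
  thus ?thesis using that by auto
qed

definition score_gen :: "(nat \<times> nat \<Rightarrow> real) \<Rightarrow> (nat \<Rightarrow> real) \<Rightarrow> (nat \<Rightarrow> real) \<Rightarrow> nat \<Rightarrow> nat \<Rightarrow> (nat \<times> nat) set \<Rightarrow> real" where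
  "score_gen f gx gy P Q T = (\<Sum>t\<in>T. f t) + (\<Sum>l\<in>{1..P} - fst ` T. gx l) + (\<Sum>l\<in>{1..Q} - snd ` T. gy l)"

lemma align_score_gen:
  assumes "is_alignment P Q \<pi>" "length x = P" "length y = Q"
  shows "align_score S x y \<pi> = score_gen (\<lambda>(\<mu>,\<nu>). S (Some (x ! (\<mu> - 1))) (Some (y ! (\<nu> - 1))))
     (\<lambda>l. S (Some (x ! (l - 1))) None) (\<lambda>l. S None (Some (y ! (l - 1)))) P Q (set \<pi>)"
  unfolding align_score_def score_gen_def using assms alignment_distinct[OF assms(1)]
  by (simp add: sum_list_distinct_conv_sum_set)



lemma gap_h1:
  assumes "A \<subseteq> {1..P}"
  shows "(\<Sum>l\<in>{1..Suc P} - A. g l) = (\<Sum>l\<in>{1..P} - A. g l) + (g (Suc P) :: real)"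
proof -
  have "{1..Suc P} - A = insert (Suc P) ({1..P} - A)" using assms by auto
  thus ?thesis by simp
qed

lemma gap_h2:
  assumes "A \<subseteq> {1..P}"
  shows "(\<Sum>l\<in>{1..Suc P} - insert (Suc P) A. g l) = (\<Sum>l\<in>{1..P} - A. (g l :: real))"
proof -
  have "{1..Suc P} - insert (Suc P) A = {1..P} - A" using assms by auto
  thus ?thesis by simp
qed

lemma gap_h3:
  assumes "A \<subseteq> {1..P}" "1 \<le> j" "j \<le> P" "j \<notin> A"
  shows "(\<Sum>l\<in>{1..Suc P} - insert j A. g l) = (\<Sum>l\<in>{1..P} - A. g l) + g (Suc P) - (g j :: real)"
proof -
  have e: "{1..Suc P} - insert j A = insert (Suc P) (({1..P} - A) - {j})" using assms by auto
  have "j \<in> {1..P} - A" using assms by auto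
  hence "(\<Sum>l\<in>({1..P} - A) - {j}. g l) = (\<Sum>l\<in>{1..P} - A. g l) - g j"
    by (simp add: sum_diff1)
  thus ?thesis unfolding e by simp
qed

lemma score_gen_delete:
  assumes ms: "mono_set T" and sub: "T \<subseteq> {1..Suc P} \<times> {1..Suc Q}"
    and bf: "\<And>t. \<bar>f t\<bar> \<le> \<sigma>" and bx: "\<And>l. \<bar>gx l\<bar> \<le> \<sigma>" and bgy: "\<And>l. \<bar>gy l\<bar> \<le> \<sigma>"
  shows "score_gen f gx gy (Suc P) (Suc Q) T
          \<le> score_gen f gx gy P Q {t\<in>T. fst t \<le> P \<and> snd t \<le> Q} + 3 * \<sigma>"
proof -
  define T' where "T' = {t\<in>T. fst t \<le> P \<and> snd t \<le> Q}"
  have fin: "finite T" using sub finite_subset by blast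
  have s0: "0 \<le> \<sigma>" using bf[of undefined] by linarith
  have fT': "fst ` T' \<subseteq> {1..P}" "snd ` T' \<subseteq> {1..Q}" using sub unfolding T'_def by auto
  have ff: "f t \<le> \<sigma>" for t using bf[of t] by auto
  have fxy: "gx l \<le> \<sigma>" "gy l \<le> \<sigma>" "- \<sigma> \<le> gx l" "- \<sigma> \<le> gy l" for l
    using bx[of l] bgy[of l] by auto
  show ?thesis
  proof (cases "\<forall>t\<in>T. fst t \<le> P \<and> snd t \<le> Q")
    case True
    hence "T' = T" unfolding T'_def by auto
    have "score_gen f gx gy (Suc P) (Suc Q) T = score_gen f gx gy P Q T' + gx (Suc P) + gy (Suc Q)"
      unfolding score_gen_def \<open>T' = T\<close> using gap_h1[OF fT'(1)] gap_h1[OF fT'(2)] \<open>T' = T\<close> by simp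
    thus ?thesis using fxy[of "Suc P"] fxy[of "Suc Q"] s0 unfolding T'_def by linarith
  next
    case False
    then obtain t0 where t0: "t0 \<in> T" "\<not> (fst t0 \<le> P \<and> snd t0 \<le> Q)" by blast
    have r0: "1 \<le> fst t0" "fst t0 \<le> Suc P" "1 \<le> snd t0" "snd t0 \<le> Suc Q" using sub t0 by auto
    have t0n: "t0 \<notin> T'" using t0 unfolding T'_def by auto
    have mo: "\<And>t. t \<in> T \<Longrightarrow> (fst t0 < fst t \<longleftrightarrow> snd t0 < snd t) \<and> (fst t0 = fst t \<longrightarrow> t0 = t)
      \<and> (snd t0 = snd t \<longrightarrow> t0 = t)" using ms t0(1) unfolding mono_set_def by blast
    have others: "t \<in> T'" if "t \<in> T" "t \<noteq> t0" for t
    proof -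
      have "fst t \<le> Suc P" "snd t \<le> Suc Q" using sub that by auto
      have "fst t \<noteq> Suc P"
      proof
        assume "fst t = Suc P"
        hence "fst t0 \<le> fst t" using r0 by simp
        moreover have "fst t0 \<noteq> fst t" using mo[OF that(1)] that(2) by blast
        ultimately have "fst t0 < fst t" by simp
        hence "snd t0 < snd t" using mo[OF that(1)] by blast
        thus False using t0 \<open>fst t = Suc P\<close> \<open>fst t0 < fst t\<close> \<open>snd t \<le> Suc Q\<close> by linarith
      qed
      moreover have "snd t \<noteq> Suc Q"
      proof
        assume "snd t = Suc Q"
        hence "snd t0 \<le> snd t" using r0 by simp
        moreover have "snd t0 \<noteq> snd t" using mo[OF that(1)] that(2) by blast
        ultimately have "snd t0 < snd t" by simp
        hence "fst t0 < fst t" using mo[OF that(1)] by blast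
        thus False using t0 \<open>snd t = Suc Q\<close> \<open>snd t0 < snd t\<close> \<open>fst t \<le> Suc P\<close> by linarith
      qed
      ultimately show ?thesis using that \<open>fst t \<le> Suc P\<close> \<open>snd t \<le> Suc Q\<close> unfolding T'_def by auto
    qed
    have Teq: "T = insert t0 T'" using others t0(1) unfolding T'_def by auto
    have finT': "finite T'" using fin unfolding T'_def by auto
    have sumf: "(\<Sum>t\<in>T. f t) = f t0 + (\<Sum>t\<in>T'. f t)" unfolding Teq using finT' t0n by simp
    have fnot: "fst t0 \<notin> fst ` T'"
    proof
      assume "fst t0 \<in> fst ` T'"
      then obtain t where tt: "t \<in> T'" "fst t = fst t0" by auto
      hence "t \<in> T" unfolding T'_def by simp
      hence "t0 = t" using mo tt(2) by metis
      thus False using t0n tt(1) by simp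
    qed
    have snot: "snd t0 \<notin> snd ` T'"
    proof
      assume "snd t0 \<in> snd ` T'"
      then obtain t where tt: "t \<in> T'" "snd t = snd t0" by auto
      hence "t \<in> T" unfolding T'_def by simp
      hence "t0 = t" using mo tt(2) by metis
      thus False using t0n tt(1) by simp
    qed
    have fimg: "fst ` T = insert (fst t0) (fst ` T')" "snd ` T = insert (snd t0) (snd ` T')"
      unfolding Teq by auto
    have xpart: "(\<Sum>l\<in>{1..Suc P} - fst ` T. gx l) \<le> (\<Sum>l\<in>{1..P} - fst ` T'. gx l) + 2 * \<sigma>
        \<and> (fst t0 = Suc P \<longrightarrow> (\<Sum>l\<in>{1..Suc P} - fst ` T. gx l) = (\<Sum>l\<in>{1..P} - fst ` T'. gx l))"
    proof (cases "fst t0 = Suc P")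
      case True
      thus ?thesis unfolding fimg using gap_h2[OF fT'(1)] s0 by simp
    next
      case False
      hence "fst t0 \<le> P" using r0 by simp
      thus ?thesis unfolding fimg using gap_h3[OF fT'(1) r0(1) _ fnot, of gx] False
          fxy[of "Suc P"] fxy[of "fst t0"] by simp
    qed
    have ypart: "(\<Sum>l\<in>{1..Suc Q} - snd ` T. gy l) \<le> (\<Sum>l\<in>{1..Q} - snd ` T'. gy l) + 2 * \<sigma>
        \<and> (snd t0 = Suc Q \<longrightarrow> (\<Sum>l\<in>{1..Suc Q} - snd ` T. gy l) = (\<Sum>l\<in>{1..Q} - snd ` T'. gy l))"
    proof (cases "snd t0 = Suc Q")
      case True
      thus ?thesis unfolding fimg using gap_h2[OF fT'(2)] s0 by simp
    next
      case False
      hence "snd t0 \<le> Q" using r0 by simp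
      thus ?thesis unfolding fimg using gap_h3[OF fT'(2) r0(3) _ snot, of gy] False
          fxy[of "Suc Q"] fxy[of "snd t0"] by simp
    qed
    have "fst t0 = Suc P \<or> snd t0 = Suc Q" using t0 r0 by linarith
    moreover have "score_gen f gx gy (Suc P) (Suc Q) T = f t0 + (\<Sum>t\<in>T'. f t) + (\<Sum>l\<in>{1..Suc P} - fst ` T. gx l)
       + (\<Sum>l\<in>{1..Suc Q} - snd ` T. gy l)" unfolding score_gen_def sumf by simp
    moreover have "score_gen f gx gy P Q {t\<in>T. fst t \<le> P \<and> snd t \<le> Q} = (\<Sum>t\<in>T'. f t) + (\<Sum>l\<in>{1..P} - fst ` T'. gx l)
       + (\<Sum>l\<in>{1..Q} - snd ` T'. gy l)" unfolding score_gen_def T'_def by simp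
    ultimately show ?thesis using xpart ypart ff[of t0] s0 by auto
  qed
qed



lemma score_gen_cong:
  assumes "\<And>t. t \<in> T \<Longrightarrow> f t = f' t" "\<And>l. l \<in> {1..P} \<Longrightarrow> gx l = gx' l"
    "\<And>l. l \<in> {1..Q} \<Longrightarrow> gy l = gy' l"
  shows "score_gen f gx gy P Q T = score_gen f' gx' gy' P Q T"
  unfolding score_gen_def using assms by (intro arg_cong2[where f="(+)"] sum.cong) auto

lemma alignment_filter:
  assumes "is_alignment P' Q' \<pi>"
  shows "is_alignment P Q (filter (\<lambda>(\<mu>,\<nu>). \<mu> \<le> P \<and> \<nu> \<le> Q) \<pi>)"
  using assms unfolding is_alignment_def
  by (auto simp: sorted_wrt_map intro: sorted_wrt_filter)

lemma L_S_snoc: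
  assumes bnd: "\<And>c d. \<bar>S c d\<bar> \<le> \<sigma>"
  shows "L_S S (x @ [a]) (y @ [b]) \<le> L_S S x y + 3 * \<sigma>"
proof -
  define P where "P = length x"
  define Q where "Q = length y"
  obtain \<pi> where al: "is_alignment (length (x@[a])) (length (y@[b])) \<pi>"
    and eq: "L_S S (x @ [a]) (y @ [b]) = align_score S (x@[a]) (y@[b]) \<pi>"
    by (rule L_S_obtain)
  have al': "is_alignment (Suc P) (Suc Q) \<pi>" using al unfolding P_def Q_def by simp
  define \<pi>' where "\<pi>' = filter (\<lambda>(\<mu>,\<nu>). \<mu> \<le> P \<and> \<nu> \<le> Q) \<pi>"
  have al2: "is_alignment P Q \<pi>'" unfolding \<pi>'_def by (rule alignment_filter[OF al'])
  have setp: "set \<pi>' = {t\<in>set \<pi>. fst t \<le> P \<and> snd t \<le> Q}" unfolding \<pi>'_def by auto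
  have sub: "set \<pi> \<subseteq> {1..Suc P} \<times> {1..Suc Q}" using alignment_range[OF al'] by fastforce
  let ?F = "\<lambda>(\<mu>,\<nu>). S (Some ((x@[a]) ! (\<mu> - 1))) (Some ((y@[b]) ! (\<nu> - 1)))"
  let ?Gx = "\<lambda>l. S (Some ((x@[a]) ! (l - 1))) None"
  let ?Gy = "\<lambda>l. S None (Some ((y@[b]) ! (l - 1)))"
  have "L_S S (x @ [a]) (y @ [b]) = score_gen ?F ?Gx ?Gy (Suc P) (Suc Q) (set \<pi>)"
    unfolding eq by (rule align_score_gen[OF al']) (auto simp: P_def Q_def)
  also have "\<dots> \<le> score_gen ?F ?Gx ?Gy P Q (set \<pi>') + 3 * \<sigma>"
    unfolding setp
    by (rule score_gen_delete[OF alignment_mono_set[OF al'] sub]) (auto simp: bnd split: prod.splits)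
  also have "score_gen ?F ?Gx ?Gy P Q (set \<pi>') =
     score_gen (\<lambda>(\<mu>,\<nu>). S (Some (x ! (\<mu> - 1))) (Some (y ! (\<nu> - 1))))
     (\<lambda>l. S (Some (x ! (l - 1))) None) (\<lambda>l. S None (Some (y ! (l - 1)))) P Q (set \<pi>')"
  proof (rule score_gen_cong)
    fix t assume t: "t \<in> set \<pi>'"
    obtain \<mu> \<nu> where tt: "t = (\<mu>, \<nu>)" by fastforce
    have "1 \<le> \<mu>" "\<mu> \<le> P" "1 \<le> \<nu>" "\<nu> \<le> Q" using alignment_range[OF al2 t] tt by auto
    thus "?F t = (\<lambda>(\<mu>,\<nu>). S (Some (x ! (\<mu> - 1))) (Some (y ! (\<nu> - 1)))) t"
      unfolding tt P_def Q_def by (auto simp: nth_append)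
  qed (auto simp: nth_append P_def Q_def)
  also have "\<dots> = align_score S x y \<pi>'"
    by (rule align_score_gen[OF al2, symmetric]) (auto simp: P_def Q_def)
  also have "\<dots> \<le> L_S S x y" by (rule L_S_ge) (use al2 in \<open>simp add: P_def Q_def\<close>)
  finally show ?thesis by simp
qed

lemma L_S_single:
  "S (Some a) (Some b) \<le> L_S S [a] [b]"
proof -
  have "is_alignment (length [a]) (length [b]) [(1,1)]" by (simp add: is_alignment_def)
  hence "align_score S [a] [b] [(1,1)] \<le> L_S S [a] [b]" by (rule L_S_ge)
  moreover have "align_score S [a] [b] [(1,1)] = S (Some a) (Some b)"
    by (simp add: align_score_def)
  ultimately show ?thesis by simp
qed

lemma L_S_sym_le:
  assumes sym: "scoring_function S"
  shows "L_S S x y \<le> L_S S y x"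
proof -
  obtain \<pi> where al: "is_alignment (length x) (length y) \<pi>" and eq: "L_S S x y = align_score S x y \<pi>"
    by (rule L_S_obtain)
  have sy: "S c d = S d c" for c d using sym unfolding scoring_function_def by blast
  have al2: "is_alignment (length y) (length x) (map prod.swap \<pi>)"
    using al unfolding is_alignment_def by (auto simp: comp_def)
  have "align_score S y x (map prod.swap \<pi>) = align_score S x y \<pi>"
  proof -
    have "(\<Sum>(\<mu>, \<nu>) \<leftarrow> map prod.swap \<pi>. S (Some (y ! (\<mu> - 1))) (Some (x ! (\<nu> - 1))))
        = (\<Sum>(\<mu>, \<nu>) \<leftarrow> \<pi>. S (Some (x ! (\<mu> - 1))) (Some (y ! (\<nu> - 1))))"
      unfolding map_map by (intro arg_cong[where f=sum_list] map_cong) (auto simp: sy)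
    moreover have "fst ` set (map prod.swap \<pi>) = snd ` set \<pi>" "snd ` set (map prod.swap \<pi>) = fst ` set \<pi>"
      by force+
    moreover have "S (Some c) None = S None (Some c)" for c using sy by blast
    ultimately show ?thesis unfolding align_score_def by simp
  qed
  thus ?thesis using L_S_ge[OF al2, of S] eq by simp
qed

lemma L_S_sym:
  assumes "scoring_function S" shows "L_S S x y = L_S S y x"
  using L_S_sym_le[OF assms, of x y] L_S_sym_le[OF assms, of y x] by simp



lemma gap_split:
  fixes P P2 :: nat assumes A: "A \<subseteq> {1..P}" and B: "B \<subseteq> {1..P2}"
  shows "(\<Sum>l\<in>{1..P+P2} - (A \<union> (\<lambda>l. l + P) ` B). g l)
     = (\<Sum>l\<in>{1..P} - A. g l) + (\<Sum>l\<in>{1..P2} - B. (g (l + P) :: real))"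
proof -
  have e: "{1..P+P2} - (A \<union> (\<lambda>l. l + P) ` B) = ({1..P} - A) \<union> (\<lambda>l. l + P) ` ({1..P2} - B)"
  proof (intro equalityI subsetI)
    fix l assume l: "l \<in> {1..P+P2} - (A \<union> (\<lambda>l. l + P) ` B)"
    show "l \<in> ({1..P} - A) \<union> (\<lambda>l. l + P) ` ({1..P2} - B)"
    proof (cases "l \<le> P")
      case True thus ?thesis using l by auto
    next
      case False
      hence "l = (l - P) + P" by simp
      moreover have "l - P \<in> {1..P2} - B" using l False by (auto simp: image_iff)
      ultimately show ?thesis by blast
    qed
  next
    fix l assume "l \<in> ({1..P} - A) \<union> (\<lambda>l. l + P) ` ({1..P2} - B)"
    thus "l \<in> {1..P+P2} - (A \<union> (\<lambda>l. l + P) ` B)" using A B by auto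
  qed
  have d: "({1..P} - A) \<inter> (\<lambda>l. l + P) ` ({1..P2} - B) = {}" by auto
  show ?thesis unfolding e
    by (subst sum.union_disjoint[OF _ _ d]) (auto simp: sum.reindex inj_on_def)
qed

lemma L_S_append:
  "L_S S x y + L_S S x2 y2 \<le> L_S S (x @ x2) (y @ y2)"
proof -
  define P where "P = length x"
  define Q where "Q = length y"
  obtain \<pi>1 where al1: "is_alignment (length x) (length y) \<pi>1" and e1: "L_S S x y = align_score S x y \<pi>1"
    by (rule L_S_obtain)
  obtain \<pi>2 where al2: "is_alignment (length x2) (length y2) \<pi>2" and e2: "L_S S x2 y2 = align_score S x2 y2 \<pi>2"
    by (rule L_S_obtain)
  define sh where "sh = (\<lambda>(\<mu>::nat,\<nu>::nat). (\<mu> + P, \<nu> + Q))"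
  define \<pi> where "\<pi> = \<pi>1 @ map sh \<pi>2"
  have r1: "\<And>t. t \<in> set \<pi>1 \<Longrightarrow> 1 \<le> fst t \<and> fst t \<le> P \<and> 1 \<le> snd t \<and> snd t \<le> Q"
    using alignment_range[OF al1] unfolding P_def Q_def by blast
  have r2: "\<And>t. t \<in> set \<pi>2 \<Longrightarrow> 1 \<le> fst t \<and> fst t \<le> length x2 \<and> 1 \<le> snd t \<and> snd t \<le> length y2"
    using alignment_range[OF al2] by blast
  have mf: "map fst \<pi> = map fst \<pi>1 @ map (\<lambda>l. l + P) (map fst \<pi>2)"
    "map snd \<pi> = map snd \<pi>1 @ map (\<lambda>l. l + Q) (map snd \<pi>2)"
    unfolding \<pi>_def sh_def by (auto simp: case_prod_beta)
  have al: "is_alignment (length (x @ x2)) (length (y @ y2)) \<pi>"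
  proof -
    have s1: "sorted_wrt (<) (map fst \<pi>1)" "sorted_wrt (<) (map snd \<pi>1)"
      "sorted_wrt (<) (map fst \<pi>2)" "sorted_wrt (<) (map snd \<pi>2)"
      using al1 al2 unfolding is_alignment_def by auto
    have "sorted_wrt (<) (map fst \<pi>)" unfolding mf sorted_wrt_append
      using s1 apply (auto simp: sorted_wrt_map)
      subgoal for a b aa ba using r1[of "(a,b)"] r2[of "(aa,ba)"] by auto
      done
    moreover have "sorted_wrt (<) (map snd \<pi>)" unfolding mf sorted_wrt_append
      using s1 apply (auto simp: sorted_wrt_map)
      subgoal for a b aa ba using r1[of "(a,b)"] r2[of "(aa,ba)"] by auto
      done
    moreover have "\<forall>(\<mu>, \<nu>)\<in>set \<pi>. 1 \<le> \<mu> \<and> \<mu> \<le> length (x@x2) \<and> 1 \<le> \<nu> \<and> \<nu> \<le> length (y@y2)"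
      using r1 r2 unfolding \<pi>_def sh_def P_def Q_def by fastforce
    ultimately show ?thesis unfolding is_alignment_def by blast
  qed
  have "align_score S (x @ x2) (y @ y2) \<pi> = align_score S x y \<pi>1 + align_score S x2 y2 \<pi>2"
  proof -
    have p1: "(\<Sum>(\<mu>, \<nu>) \<leftarrow> \<pi>1. S (Some ((x@x2) ! (\<mu> - 1))) (Some ((y@y2) ! (\<nu> - 1))))
      = (\<Sum>(\<mu>, \<nu>) \<leftarrow> \<pi>1. S (Some (x ! (\<mu> - 1))) (Some (y ! (\<nu> - 1))))"
    proof (intro arg_cong[where f=sum_list] map_cong refl)
      fix t assume "t \<in> set \<pi>1"
      hence "fst t - 1 < length x" "snd t - 1 < length y" using r1 unfolding P_def Q_def by fastforce+
      thus "(case t of (\<mu>, \<nu>) \<Rightarrow> S (Some ((x@x2) ! (\<mu> - 1))) (Some ((y@y2) ! (\<nu> - 1)))) =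
            (case t of (\<mu>, \<nu>) \<Rightarrow> S (Some (x ! (\<mu> - 1))) (Some (y ! (\<nu> - 1))))"
        by (simp add: case_prod_beta nth_append)
    qed
    have p2: "(\<Sum>(\<mu>, \<nu>) \<leftarrow> map sh \<pi>2. S (Some ((x@x2) ! (\<mu> - 1))) (Some ((y@y2) ! (\<nu> - 1))))
      = (\<Sum>(\<mu>, \<nu>) \<leftarrow> \<pi>2. S (Some (x2 ! (\<mu> - 1))) (Some (y2 ! (\<nu> - 1))))"
      unfolding map_map
    proof (intro arg_cong[where f=sum_list] map_cong refl)
      fix t assume "t \<in> set \<pi>2"
      hence fs: "1 \<le> fst t" "1 \<le> snd t" using r2 by fastforce+
      obtain a b where t0: "t = (a,b)" by fastforce
      have t: "t = (a,b)" "1 \<le> a" "1 \<le> b" using fs t0 by auto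
      have "(x@x2) ! (a + P - 1) = x2 ! (a-1)" "(y@y2) ! (b + Q - 1) = y2 ! (b-1)"
        using t by (auto simp: nth_append P_def Q_def)
      thus "((\<lambda>(\<mu>, \<nu>). S (Some ((x@x2) ! (\<mu> - 1))) (Some ((y@y2) ! (\<nu> - 1)))) \<circ> sh) t =
            (case t of (\<mu>, \<nu>) \<Rightarrow> S (Some (x2 ! (\<mu> - 1))) (Some (y2 ! (\<nu> - 1))))"
        by (simp add: t sh_def)
    qed
    have fs: "fst ` set \<pi> = fst ` set \<pi>1 \<union> (\<lambda>l. l + P) ` (fst ` set \<pi>2)"
      "snd ` set \<pi> = snd ` set \<pi>1 \<union> (\<lambda>l. l + Q) ` (snd ` set \<pi>2)"
      using arg_cong[OF mf(1), of set] arg_cong[OF mf(2), of set] by (simp_all add: image_image)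
    have g1: "(\<Sum>l\<in>{1..length (x@x2)} - fst ` set \<pi>. S (Some ((x@x2) ! (l - 1))) None)
      = (\<Sum>l\<in>{1..length x} - fst ` set \<pi>1. S (Some (x ! (l - 1))) None)
       + (\<Sum>l\<in>{1..length x2} - fst ` set \<pi>2. S (Some (x2 ! (l - 1))) None)"
    proof -
      have "(\<Sum>l\<in>{1..length (x@x2)} - fst ` set \<pi>. S (Some ((x@x2) ! (l - 1))) None)
        = (\<Sum>l\<in>{1..P} - fst ` set \<pi>1. S (Some ((x@x2) ! (l - 1))) None)
         + (\<Sum>l\<in>{1..length x2} - fst ` set \<pi>2. S (Some ((x@x2) ! (l + P - 1))) None)"
        unfolding fs length_append P_def[symmetric] by (rule gap_split) (use r1 r2 in \<open>force+\<close>)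
      also have "\<dots> = (\<Sum>l\<in>{1..length x} - fst ` set \<pi>1. S (Some (x ! (l - 1))) None)
       + (\<Sum>l\<in>{1..length x2} - fst ` set \<pi>2. S (Some (x2 ! (l - 1))) None)"
        by (intro arg_cong2[where f="(+)"] sum.cong) (auto simp: nth_append P_def)
      finally show ?thesis .
    qed
    have g2: "(\<Sum>l\<in>{1..length (y@y2)} - snd ` set \<pi>. S None (Some ((y@y2) ! (l - 1))))
      = (\<Sum>l\<in>{1..length y} - snd ` set \<pi>1. S None (Some (y ! (l - 1))))
       + (\<Sum>l\<in>{1..length y2} - snd ` set \<pi>2. S None (Some (y2 ! (l - 1))))"
    proof -
      have "(\<Sum>l\<in>{1..length (y@y2)} - snd ` set \<pi>. S None (Some ((y@y2) ! (l - 1))))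
        = (\<Sum>l\<in>{1..Q} - snd ` set \<pi>1. S None (Some ((y@y2) ! (l - 1))))
         + (\<Sum>l\<in>{1..length y2} - snd ` set \<pi>2. S None (Some ((y@y2) ! (l + Q - 1))))"
        unfolding fs length_append Q_def[symmetric] by (rule gap_split) (use r1 r2 in \<open>force+\<close>)
      also have "\<dots> = (\<Sum>l\<in>{1..length y} - snd ` set \<pi>1. S None (Some (y ! (l - 1))))
       + (\<Sum>l\<in>{1..length y2} - snd ` set \<pi>2. S None (Some (y2 ! (l - 1))))"
        by (intro arg_cong2[where f="(+)"] sum.cong) (auto simp: nth_append Q_def)
      finally show ?thesis .
    qed
    show ?thesis unfolding align_score_def g1 g2 unfolding \<pi>_def sum_list_append map_append
      using p1 p2 by simp
  qed
  thus ?thesis using L_S_ge[OF al, of S] e1 e2 by simp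
qed



lemma pair_swap_mid:
  "pair_pmf (pair_pmf A B) (pair_pmf C D) =
   map_pmf (\<lambda>((a,c),(b,d)). ((a,b),(c,d))) (pair_pmf (pair_pmf A C) (pair_pmf B D))"
  unfolding pair_pmf_def map_pmf_def
  apply (simp add: bind_assoc_pmf bind_return_pmf)
  apply (rule bind_pmf_cong[OF refl])
  apply (rule sym)
  apply (subst bind_commute_pmf)
  apply (rule bind_pmf_cong[OF refl])
  apply (rule refl)
  done

definition W :: "'a pmf \<Rightarrow> nat \<Rightarrow> nat \<Rightarrow> ('a list \<times> 'a list) pmf" where
  "W p a b = pair_pmf (replicate_pmf a p) (replicate_pmf b p)"

definition gE :: "'a pmf \<Rightarrow> 'a scoring \<Rightarrow> nat \<Rightarrow> nat \<Rightarrow> real" where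
  "gE p S a b = measure_pmf.expectation (W p a b) (\<lambda>(x, y). L_S S x y)"

lemma fin_rep: "finite (set_pmf (replicate_pmf n (p :: 'a::finite pmf)))"
proof -
  have "set_pmf (replicate_pmf n p) \<subseteq> {xs. set xs \<subseteq> UNIV \<and> length xs = n}"
    by (auto simp: set_replicate_pmf)
  thus ?thesis using finite_lists_length_eq[OF finite_class.finite_UNIV, of n] finite_subset by blast
qed

lemma fin_W: "finite (set_pmf (W (p :: 'a::finite pmf) a b))"
  unfolding W_def using fin_rep by (auto intro: finite_cartesian_product)

lemma rep_cat: "replicate_pmf (a + b) p = map_pmf (\<lambda>(u,v). u @ v) (pair_pmf (replicate_pmf a p) (replicate_pmf b p))"
  unfolding replicate_pmf_distrib pair_pmf_def map_pmf_def by (simp add: bind_assoc_pmf bind_return_pmf)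

lemma W_cat: "W p (a + a') (b + b') =
   map_pmf (\<lambda>((x,y),(x',y')). (x @ x', y @ y')) (pair_pmf (W p a b) (W p a' b'))"
proof -
  have "W p (a + a') (b + b') = map_pmf (\<lambda>(u, v). ((\<lambda>(u,v). u @ v) u, (\<lambda>(u,v). u @ v) v))
       (pair_pmf (pair_pmf (replicate_pmf a p) (replicate_pmf a' p)) (pair_pmf (replicate_pmf b p) (replicate_pmf b' p)))"
    unfolding W_def rep_cat map_pair ..
  also have "\<dots> = map_pmf (\<lambda>((x,y),(x',y')). (x @ x', y @ y')) (pair_pmf (W p a b) (W p a' b'))"
    unfolding W_def by (subst pair_swap_mid) (simp add: map_pmf_comp case_prod_beta case_prod_unfold)
  finally show ?thesis .
qed

lemma seg_rep:
  assumes "u \<le> v" "v \<le> m"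
  shows "map_pmf (\<lambda>xs. seg xs u v) (replicate_pmf m p) = replicate_pmf (v - u) p"
proof -
  have m: "m = u + ((v - u) + (m - v))" using assms by simp
  have "map_pmf (\<lambda>xs. seg xs u v) (replicate_pmf m p) =
     map_pmf (\<lambda>xs. seg xs u v) (map_pmf (\<lambda>(a,b). a @ b) (pair_pmf (replicate_pmf u p)
        (map_pmf (\<lambda>(a,b). a @ b) (pair_pmf (replicate_pmf (v - u) p) (replicate_pmf (m - v) p)))))"
    by (subst m, subst rep_cat, subst rep_cat) (rule refl)
  also have "\<dots> = map_pmf (\<lambda>x. fst (snd x)) (pair_pmf (replicate_pmf u p)
        (pair_pmf (replicate_pmf (v - u) p) (replicate_pmf (m - v) p)))"
    unfolding pair_map_pmf2 map_pmf_comp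
  proof (intro map_pmf_cong refl)
    fix z assume z: "z \<in> set_pmf (pair_pmf (replicate_pmf u p)
        (pair_pmf (replicate_pmf (v - u) p) (replicate_pmf (m - v) p)))"
    obtain a b c where zz: "z = (a, b, c)" by (cases z) auto
    have "length a = u" "length b = v - u" using z unfolding zz by (simp_all add: set_replicate_pmf)
    thus "seg ((\<lambda>(a, b). a @ b) (apsnd (\<lambda>(a, b). a @ b) z)) u v = fst (snd z)"
      unfolding zz seg_def by simp
  qed
  also have "\<dots> = replicate_pmf (v - u) p"
    by (simp add: map_pmf_comp[symmetric] map_snd_pair_pmf map_fst_pair_pmf)
  finally show ?thesis .
qed

lemma g_sym:
  assumes "scoring_function S" shows "gE p S a b = gE p S b a"
proof -
  have "W p a b = map_pmf (\<lambda>(x, y). (y, x)) (W p b a)" unfolding W_def by (rule pair_commute_pmf)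
  thus ?thesis unfolding gE_def using L_S_sym[OF assms] by (simp add: case_prod_unfold)
qed

lemma g_super:
  fixes p :: "'a::finite pmf"
  shows "gE p S a b + gE p S a' b' \<le> gE p S (a + a') (b + b')"
proof -
  let ?M = "pair_pmf (W p a b) (W p a' b')"
  let ?h = "\<lambda>w. L_S S (fst w) (snd w)"
  have fin: "finite (set_pmf ?M)" using fin_W by (auto intro: finite_cartesian_product)
  have e1: "gE p S (a + a') (b + b') = measure_pmf.expectation ?M
      (\<lambda>z. L_S S (fst (fst z) @ fst (snd z)) (snd (fst z) @ snd (snd z)))"
    unfolding gE_def W_cat by (simp add: case_prod_beta)
  have e2: "measure_pmf.expectation ?M (\<lambda>z. ?h (fst z) + ?h (snd z)) \<le> measure_pmf.expectation ?M
      (\<lambda>z. L_S S (fst (fst z) @ fst (snd z)) (snd (fst z) @ snd (snd z)))"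
    apply (rule integral_mono_AE)
      apply (rule integrable_measure_pmf_finite[OF fin])
     apply (rule integrable_measure_pmf_finite[OF fin])
    apply (rule AE_pmfI)
    apply (rule L_S_append)
    done
  have e3: "measure_pmf.expectation ?M (\<lambda>z. ?h (fst z) + ?h (snd z))
      = measure_pmf.expectation ?M (\<lambda>z. ?h (fst z)) + measure_pmf.expectation ?M (\<lambda>z. ?h (snd z))"
    by (rule Bochner_Integration.integral_add; rule integrable_measure_pmf_finite[OF fin])
  have e4: "measure_pmf.expectation ?M (\<lambda>z. ?h (fst z)) = gE p S a b"
    unfolding gE_def case_prod_unfold by (rule expectation_pair_pmf_fst)
  have e5: "measure_pmf.expectation ?M (\<lambda>z. ?h (snd z)) = gE p S a' b'"
    unfolding gE_def case_prod_unfold by (rule expectation_pair_pmf_snd)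
  show ?thesis using e1 e2 e3 e4 e5 by linarith
qed



lemma len1: "length xs = 1 \<Longrightarrow> \<exists>c. xs = [c]"
  by (cases xs) auto

lemma g_step:
  fixes p :: "'a::finite pmf"
  assumes bnd: "\<And>c d. \<bar>S c d\<bar> \<le> \<sigma>"
  shows "gE p S (Suc n) (Suc n) \<le> gE p S n n + 3 * \<sigma>"
proof -
  let ?M = "pair_pmf (W p n n) (W p 1 1)"
  let ?h = "\<lambda>w. L_S S (fst w) (snd w)"
  have fin: "finite (set_pmf ?M)" using fin_W by (auto intro: finite_cartesian_product)
  have e1: "gE p S (Suc n) (Suc n) = measure_pmf.expectation ?M
      (\<lambda>z. L_S S (fst (fst z) @ fst (snd z)) (snd (fst z) @ snd (snd z)))"
    using W_cat[of p n 1 n 1] unfolding gE_def by (simp add: case_prod_beta)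
  have e2: "measure_pmf.expectation ?M
      (\<lambda>z. L_S S (fst (fst z) @ fst (snd z)) (snd (fst z) @ snd (snd z)))
     \<le> measure_pmf.expectation ?M (\<lambda>z. ?h (fst z) + 3 * \<sigma>)"
  proof (rule integral_mono_AE)
    show "AE z in measure_pmf ?M. L_S S (fst (fst z) @ fst (snd z)) (snd (fst z) @ snd (snd z))
        \<le> ?h (fst z) + 3 * \<sigma>"
    proof (rule AE_pmfI)
      fix z assume z: "z \<in> set_pmf ?M"
      hence "length (fst (snd z)) = 1" "length (snd (snd z)) = 1"
        by (auto simp: W_def set_replicate_pmf)
      then obtain c d where "fst (snd z) = [c]" "snd (snd z) = [d]" using len1 by metis
      thus "L_S S (fst (fst z) @ fst (snd z)) (snd (fst z) @ snd (snd z)) \<le> ?h (fst z) + 3 * \<sigma>"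
        using L_S_snoc[OF bnd] by simp
    qed
  qed (rule integrable_measure_pmf_finite[OF fin])+
  have e3: "measure_pmf.expectation ?M (\<lambda>z. ?h (fst z) + 3 * \<sigma>)
      = measure_pmf.expectation ?M (\<lambda>z. ?h (fst z)) + 3 * \<sigma>"
    by (rule trans[OF Bochner_Integration.integral_add]; (rule integrable_measure_pmf_finite[OF fin])?; simp)
  have e4: "measure_pmf.expectation ?M (\<lambda>z. ?h (fst z)) = gE p S n n"
    unfolding gE_def case_prod_unfold by (rule expectation_pair_pmf_fst)
  show ?thesis using e1 e2 e3 e4 by linarith
qed

lemma g_11:
  fixes p :: "'a::finite pmf"
  assumes bnd: "\<And>c d. \<bar>S c d\<bar> \<le> \<sigma>"
  shows "- \<sigma> \<le> gE p S 1 1"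
proof -
  have fin: "finite (set_pmf (W p 1 1))" by (rule fin_W)
  have "measure_pmf.expectation (W p 1 1) (\<lambda>_. - \<sigma>) \<le> gE p S 1 1"
    unfolding gE_def
  proof (rule integral_mono_AE)
    show "AE z in measure_pmf (W p 1 1). - \<sigma> \<le> (case z of (x, y) \<Rightarrow> L_S S x y)"
    proof (rule AE_pmfI)
      fix z assume z: "z \<in> set_pmf (W p 1 1)"
      hence "length (fst z) = 1" "length (snd z) = 1"
        by (auto simp: W_def set_replicate_pmf)
      then obtain c d where "fst z = [c]" "snd z = [d]" using len1 by metis
      hence "(case z of (x, y) \<Rightarrow> L_S S x y) = L_S S [c] [d]" by (simp add: case_prod_unfold)
      moreover have "S (Some c) (Some d) \<le> L_S S [c] [d]" by (rule L_S_single)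
      moreover have "- \<sigma> \<le> S (Some c) (Some d)" using bnd[of "Some c" "Some d"] by linarith
      ultimately show "- \<sigma> \<le> (case z of (x, y) \<Rightarrow> L_S S x y)" by linarith
    qed
  qed (rule integrable_measure_pmf_finite[OF fin])+
  thus ?thesis by simp
qed

lemma g_c:
  fixes p :: "'a::finite pmf"
  assumes bnd: "\<And>c d. \<bar>S c d\<bar> \<le> \<sigma>" and n: "n \<ge> 1" and c: "c \<in> {n - 1, n, n + 1}"
  shows "gE p S c c \<le> gE p S n n + 2 * \<sigma> + (real c - real n) * \<sigma>"
proof -
  have s0: "0 \<le> \<sigma>" using bnd[of undefined undefined] by linarith
  consider "c = n - 1" | "c = n" | "c = n + 1" using c by auto
  thus ?thesis
  proof cases
    case 1
    have "gE p S (n - 1) (n - 1) + gE p S 1 1 \<le> gE p S (n - 1 + 1) (n - 1 + 1)" by (rule g_super)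
    hence "gE p S (n - 1) (n - 1) + gE p S 1 1 \<le> gE p S n n" using n by simp
    moreover have "real c = real n - 1" using 1 n by simp
    ultimately show ?thesis using g_11[where S=S and \<sigma>=\<sigma> and p=p, OF bnd] 1 by (simp add: algebra_simps)
  next
    case 2 thus ?thesis using s0 by simp
  next
    case 3 thus ?thesis using g_step[where S=S and \<sigma>=\<sigma> and p=p and n=n, OF bnd] by (simp add: algebra_simps)
  qed
qed

lemma sup_norm_bound:
  fixes S :: "('a::finite) scoring"
  shows "\<bar>S c d\<bar> \<le> sup_norm S"
proof -
  have "{\<bar>S c d\<bar> | c d. True} = (\<lambda>(c,d). \<bar>S c d\<bar>) ` UNIV" by auto
  hence "finite {\<bar>S c d\<bar> | c d. True}" by simp
  thus ?thesis unfolding sup_norm_def by (intro Max_ge) auto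
qed



lemma mono_chain:
  fixes f :: "nat \<Rightarrow> nat"
  assumes "\<And>i. 1 \<le> i \<Longrightarrow> i \<le> N \<Longrightarrow> f (i - 1) \<le> f i"
  shows "i \<le> j \<Longrightarrow> j \<le> N \<Longrightarrow> f i \<le> f j"
proof (induction j)
  case 0 thus ?case by simp
next
  case (Suc j)
  show ?case
  proof (cases "i = Suc j")
    case True thus ?thesis by simp
  next
    case False
    hence "f i \<le> f j" using Suc by simp
    also have "f j \<le> f (Suc j)" using assms[of "Suc j"] Suc.prems by simp
    finally show ?thesis .
  qed
qed

lemma telescope:
  fixes f :: "nat \<Rightarrow> real"
  shows "(\<Sum>i = 1..N. f i - f (i - 1)) = f N - f 0"
  by (induction N) (auto simp: sum.atLeast1_atMost_eq)

theorem mainTheorem10: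
  fixes S :: "('a::finite) scoring" and p :: "'a pmf" and k n m :: nat
    and r s :: "nat list"
  assumes "scoring_function S"
    and "k \<ge> 1" and "n \<ge> 1" and "m = k * n"
    and "(r, s) \<in> P_mn m n"
  shows "measure_pmf.expectation (words_pmf p m) (\<lambda>(xs, ys). L_m S r s xs ys) / real m
           \<le> lambda_n p S n + 2 * sup_norm S / real n"
proof -
  note sym = assms(1)
  define \<sigma> where "\<sigma> = sup_norm S"
  have bnd: "\<And>c d. \<bar>S c d\<bar> \<le> \<sigma>" unfolding \<sigma>_def by (rule sup_norm_bound)
  have s0: "0 \<le> \<sigma>" using bnd[of undefined undefined] by linarith
  have kdiv: "m div n = k" using assms(3,4) by simp
  have PP: "length r = 2 * k + 1 \<and> length s = 2 * k + 1 \<and>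
      r ! 0 = 0 \<and> s ! 0 = 0 \<and> r ! (2 * k) = m \<and> s ! (2 * k) = m \<and>
      (\<forall>i \<in> {1..2 * k}. r ! (i - 1) \<le> r ! i \<and> s ! (i - 1) \<le> s ! i \<and>
         (r ! i - r ! (i - 1)) + (s ! i - s ! (i - 1)) \<in> {n - 1, n, n + 1})"
    using assms(5) unfolding P_mn_def kdiv Let_def by (simp only: mem_Collect_eq prod.case; blast)
  have P: "length r = 2 * k + 1" "length s = 2 * k + 1" "r ! 0 = 0" "s ! 0 = 0"
     "r ! (2 * k) = m" "s ! (2 * k) = m" using PP by simp_all
  have Pst: "\<And>i. i \<in> {1..2 * k} \<Longrightarrow> r ! (i - 1) \<le> r ! i \<and> s ! (i - 1) \<le> s ! i \<and>
         (r ! i - r ! (i - 1)) + (s ! i - s ! (i - 1)) \<in> {n - 1, n, n + 1}"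
    using PP by blast
  have rmono: "r ! i \<le> r ! j" "s ! i \<le> s ! j" if "i \<le> j" "j \<le> 2 * k" for i j
    using mono_chain[of "2 * k" "\<lambda>i. r ! i" i j] mono_chain[of "2 * k" "\<lambda>i. s ! i" i j] Pst that
    by auto
  define a where "a i = r ! i - r ! (i - 1)" for i
  define b where "b i = s ! i - s ! (i - 1)" for i
  define G where "G = gE p S n n + 2 * \<sigma>"
  define F where "F i = (\<lambda>z. L_S S (seg (fst z) (r ! (i - 1)) (r ! i)) (seg (snd z) (s ! (i - 1)) (s ! i)))" for i
  have finw: "finite (set_pmf (words_pmf p m))" using fin_W[of p m m] unfolding W_def words_pmf_def .
  have E1: "measure_pmf.expectation (words_pmf p m) (\<lambda>(xs, ys). L_m S r s xs ys)
      = (\<Sum>i\<in>{1..2*k}. measure_pmf.expectation (words_pmf p m) (F i))"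
  proof -
    have "(\<lambda>(xs, ys). L_m S r s xs ys) = (\<lambda>z. \<Sum>i\<in>{1..2*k}. F i z)"
      unfolding L_m_def F_def P by (auto simp: fun_eq_iff)
    thus ?thesis
      by (simp only:) (rule Bochner_Integration.integral_sum, rule integrable_measure_pmf_finite[OF finw])
  qed
  have E2: "measure_pmf.expectation (words_pmf p m) (F i) = gE p S (a i) (b i)" if i: "i \<in> {1..2*k}" for i
  proof -
    have le: "r ! (i - 1) \<le> r ! i" "r ! i \<le> m" "s ! (i - 1) \<le> s ! i" "s ! i \<le> m"
      using Pst[OF i] rmono[of i "2*k"] i P by auto
    have "map_pmf (\<lambda>(xs, ys). (seg xs (r ! (i - 1)) (r ! i), seg ys (s ! (i - 1)) (s ! i))) (words_pmf p m)
        = W p (a i) (b i)"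
      unfolding words_pmf_def map_pair W_def a_def b_def using seg_rep le by metis
    moreover have "measure_pmf.expectation (map_pmf (\<lambda>(xs, ys). (seg xs (r ! (i - 1)) (r ! i), seg ys (s ! (i - 1)) (s ! i))) (words_pmf p m)) (\<lambda>(x, y). L_S S x y)
       = measure_pmf.expectation (words_pmf p m) (\<lambda>z. (\<lambda>(x, y). L_S S x y) ((\<lambda>(xs, ys). (seg xs (r ! (i - 1)) (r ! i), seg ys (s ! (i - 1)) (s ! i))) z))"
      by (rule integral_map_pmf)
    moreover have "(\<lambda>z. (\<lambda>(x, y). L_S S x y) ((\<lambda>(xs, ys). (seg xs (r ! (i - 1)) (r ! i), seg ys (s ! (i - 1)) (s ! i))) z)) = F i"
      unfolding F_def by (simp add: fun_eq_iff case_prod_unfold)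
    ultimately have "measure_pmf.expectation (W p (a i) (b i)) (\<lambda>(x, y). L_S S x y)
       = measure_pmf.expectation (words_pmf p m) (F i)" by simp
    thus ?thesis unfolding gE_def by simp
  qed
  have E3: "gE p S (a i) (b i) \<le> (G + (real (a i + b i) - real n) * \<sigma>) / 2" if i: "i \<in> {1..2*k}" for i
  proof -
    have "gE p S (a i) (b i) + gE p S (b i) (a i) \<le> gE p S (a i + b i) (b i + a i)" by (rule g_super)
    hence "2 * gE p S (a i) (b i) \<le> gE p S (a i + b i) (a i + b i)"
      using g_sym[OF sym, of p "a i" "b i"] by (simp add: add.commute)
    moreover have "gE p S (a i + b i) (a i + b i) \<le> gE p S n n + 2 * \<sigma> + (real (a i + b i) - real n) * \<sigma>"
      by (rule g_c[OF bnd assms(3)]) (use Pst[OF i] in \<open>unfold a_def b_def; blast\<close>)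
    ultimately show ?thesis unfolding G_def by simp
  qed
  have E4: "(\<Sum>i\<in>{1..2*k}. real (a i + b i)) = 2 * real m"
  proof -
    have "(\<Sum>i\<in>{1..2*k}. real (a i + b i)) = (\<Sum>i = 1..2*k. real (r ! i) - real (r ! (i - 1)))
        + (\<Sum>i = 1..2*k. real (s ! i) - real (s ! (i - 1)))"
      unfolding sum.distrib[symmetric]
    proof (intro sum.cong refl)
      fix i assume i: "i \<in> {1..2*k}"
      have le: "r ! (i - 1) \<le> r ! i" "s ! (i - 1) \<le> s ! i" using Pst[OF i] by auto
      have "real (a i) = real (r ! i) - real (r ! (i - 1))" unfolding a_def using le(1) by (rule of_nat_diff)
      moreover have "real (b i) = real (s ! i) - real (s ! (i - 1))" unfolding b_def using le(2) by (rule of_nat_diff)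
      ultimately show "real (a i + b i) = real (r ! i) - real (r ! (i - 1)) + (real (s ! i) - real (s ! (i - 1)))"
        by simp
    qed
    also have "\<dots> = 2 * real m"
      using telescope[of "\<lambda>i. real (r ! i)" "2*k"] telescope[of "\<lambda>i. real (s ! i)" "2*k"] P by simp
    finally show ?thesis .
  qed
  have "measure_pmf.expectation (words_pmf p m) (\<lambda>(xs, ys). L_m S r s xs ys)
      \<le> (\<Sum>i\<in>{1..2*k}. (G + (real (a i + b i) - real n) * \<sigma>) / 2)"
    unfolding E1 using E2 E3 by (intro sum_mono) simp
  also have "\<dots> = real k * G + \<sigma> / 2 * ((\<Sum>i\<in>{1..2*k}. real (a i + b i)) - 2 * real k * real n)"
  proof -
    have "(\<Sum>i\<in>{1..2*k}. (G + (real (a i + b i) - real n) * \<sigma>) / 2)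
      = (\<Sum>i\<in>{1..2*k}. (G / 2 - real n * \<sigma> / 2) + \<sigma> / 2 * real (a i + b i))"
      by (intro sum.cong refl) (simp add: field_simps)
    also have "\<dots> = real (2 * k) * (G / 2 - real n * \<sigma> / 2) + \<sigma> / 2 * (\<Sum>i\<in>{1..2*k}. real (a i + b i))"
      by (simp only: sum.distrib sum_distrib_left sum_constant card_atLeastAtMost) simp
    also have "\<dots> = real k * G + \<sigma> / 2 * ((\<Sum>i\<in>{1..2*k}. real (a i + b i)) - 2 * real k * real n)"
      by (simp add: algebra_simps)
    finally show ?thesis .
  qed
  also have "\<dots> = real k * G" unfolding E4 using assms(4) by simp
  finally have main: "measure_pmf.expectation (words_pmf p m) (\<lambda>(xs, ys). L_m S r s xs ys) \<le> real k * G" .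
  have mpos: "real m = real k * real n" "real k > 0" "real n > 0" using assms(2,3,4) by auto
  have "measure_pmf.expectation (words_pmf p m) (\<lambda>(xs, ys). L_m S r s xs ys) / real m \<le> real k * G / real m"
    by (rule divide_right_mono[OF main]) simp
  also have "\<dots> = G / real n" using mpos by simp
  also have "\<dots> = lambda_n p S n + 2 * sup_norm S / real n"
    unfolding G_def lambda_n_def gE_def W_def words_pmf_def \<sigma>_def by (simp add: add_divide_distrib)
  finally show ?thesis .
qed

end
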